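(* Consider $2$ agents with additive, normalized (not necessarily identical) valuations, and online algorithms without access to predictions. For any given $a\in(0,1]$, there is no online algorithm that guarantees an $a$-EFX allocation, even if the time horizon $T$ is known to the algorithm in advance.
   Context: Online fair division model: there is a set $N=[n]$ of agents and goods $g_1,\dots,g_T$ arriving one per time step. Each agent $i$ has an additive normalized valuation $v_i$ ($v_i(g_t)\ge0$, $\sum_{t=1}^T v_i(g_t)=1$, $v_i(S)=\sum_{g\in S}v_i(g)$). When $g_t$ arrives, the values $v_i(g_t)$ of all agents are revealed and $g_t$ must be immediately and irrevocably allocated to one agent. For a bundle $S\ne\emptyset$ and valuation $f$, $\bar S^f=S\setminus\{g\}$ with $g\in\arg\max_{g'\in S}f(S\setminus\{g'\})$, and $\bar\emptyset^f=\emptyset$. For $a\in[0,1]$, an allocation $(A_1,\dots,A_n)$ is $a$-EFX if $v_i(A_i)\ge a\cdot v_i(\bar{A_j}^{v_i})$ for all $i,j$. An algorithm guarantees an $a$-EFX allocation if for every admissible input the final allocation is $a$-EFX with respect to the true valuations. *)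

theory Defs
  imports Complex_Main
begin

(* Two agents, encoded as bool (False = agent 1, True = agent 2).
   Goods g_1..g_T are indexed 0..T-1.  A valuation profile is
   v :: bool => nat => real, with v i t the value of agent i for good t. *)

type_synonym agent = bool
type_synonym profile = "agent \<Rightarrow> nat \<Rightarrow> real"

definition normalized :: "nat \<Rightarrow> profile \<Rightarrow> bool" where
  "normalized T v \<longleftrightarrow> (\<forall>i t. v i t \<ge> 0) \<and> (\<forall>i. (\<Sum>t<T. v i t) = 1)"

definition val :: "profile \<Rightarrow> agent \<Rightarrow> nat set \<Rightarrow> real" where
  "val v i S = (\<Sum>g\<in>S. v i g)"

definition bar :: "(nat set \<Rightarrow> real) \<Rightarrow> nat set \<Rightarrow> nat set" where
  "bar f S = (if S = {} then {} else S - {ARG_MAX (\<lambda>g. f (S - {g})) g. g \<in> S})"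

definition a_EFX :: "real \<Rightarrow> profile \<Rightarrow> (agent \<Rightarrow> nat set) \<Rightarrow> bool" where
  "a_EFX a v A \<longleftrightarrow> (\<forall>i j. val v i (A i) \<ge> a * val v i (bar (val v i) (A j)))"

(* A deterministic online algorithm that knows the horizon T:
   alg T h, where h is the list of revealed value pairs (v_1(g_s), v_2(g_s))
   for s = 1..t, returns the agent receiving g_t. *)
type_synonym online_alg = "nat \<Rightarrow> (real \<times> real) list \<Rightarrow> agent"

definition history :: "profile \<Rightarrow> nat \<Rightarrow> (real \<times> real) list" where
  "history v t = map (\<lambda>s. (v False s, v True s)) [0..<Suc t]"

definition run_alg :: "online_alg \<Rightarrow> nat \<Rightarrow> profile \<Rightarrow> agent \<Rightarrow> nat set" where
  "run_alg alg T v i = {t. t < T \<and> alg T (history v t) = i}"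

end

theory Submission
  imports Defs
begin

lemma bar_ge:
  assumes "finite S" "g \<in> S"
  shows "val v i (S - {g}) \<le> val v i (bar (val v i) S)"
proof -
  let ?f = "\<lambda>g. val v i (S - {g})"
  have ne: "S \<noteq> {}" using assms by auto
  have "Max (?f ` S) \<in> ?f ` S" using assms by (intro Max_in) auto
  then obtain x where x: "x \<in> S" "?f x = Max (?f ` S)" by force
  have mx: "\<And>y. y \<in> S \<Longrightarrow> ?f y \<le> ?f x"
    using x assms by (simp add: Max_ge)
  have "?f g \<le> ?f (ARG_MAX ?f g. g \<in> S)"
    by (rule arg_maxI[where f="?f" and P="\<lambda>g. g \<in> S" and x=x]) (use x mx assms in \<open>auto simp: not_less\<close>)
  then show ?thesis using ne unfolding bar_def by simp
qed

lemma viol: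
  assumes "0 \<le> a" "finite (A j)" "g \<in> A j"
    and "val v i (A i) < a * (val v i (A j) - v i g)"
  shows "\<not> a_EFX a v A"
proof
  assume e: "a_EFX a v A"
  have "val v i (A j - {g}) = val v i (A j) - v i g"
    using assms by (simp add: val_def sum_diff1)
  moreover have "val v i (A j - {g}) \<le> val v i (bar (val v i) (A j))"
    using bar_ge assms by blast
  ultimately have "a * (val v i (A j) - v i g) \<le> a * val v i (bar (val v i) (A j))"
    using assms(1) by (simp add: mult_left_mono)
  moreover have "a * val v i (bar (val v i) (A j)) \<le> val v i (A i)"
    using e unfolding a_EFX_def by blast
  ultimately show False using assms(4) by linarith
qed

lemma hist_eq:
  assumes "\<And>i s. s \<le> t \<Longrightarrow> v i s = w i s"
  shows "history v t = history w t"
  unfolding history_def using assms by (auto intro!: map_cong)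

lemma run_fin: "finite (run_alg alg T v i)"
  unfolding run_alg_def by auto

lemma run_part:
  "val v i (run_alg alg T v j) = (\<Sum>t<T. v i t) - val v i (run_alg alg T v (\<not> j))"
proof -
  have u: "run_alg alg T v j \<union> run_alg alg T v (\<not> j) = {..<T}"
    unfolding run_alg_def by auto
  have d: "run_alg alg T v j \<inter> run_alg alg T v (\<not> j) = {}"
    unfolding run_alg_def by auto
  have "(\<Sum>t<T. v i t) = val v i (run_alg alg T v j) + val v i (run_alg alg T v (\<not> j))"
    unfolding val_def u[symmetric] by (rule sum.union_disjoint) (use d run_fin in auto)
  then show ?thesis by simp
qed

theorem theorem3p4:
  fixes a :: real
  assumes "0 < a" and "a \<le> 1"
  shows "\<forall>alg :: online_alg. \<exists>T v. normalized T v \<and> \<not> a_EFX a v (run_alg alg T v)"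
proof
  fix alg :: online_alg
  define N where "N = nat \<lceil>1/a\<rceil> + 2"
  have cpos: "\<lceil>1/a\<rceil> \<ge> 1" using assms by (simp add: one_le_ceiling)
  have RN: "real N = real_of_int \<lceil>1/a\<rceil> + 2" unfolding N_def using cpos by simp
  have N3: "N \<ge> 3" unfolding N_def using cpos by linarith
  have "1/a \<le> real_of_int \<lceil>1/a\<rceil>" by simp
  then have "1/a < real N - 1" using RN by linarith
  then have aN: "1 < a * (real N - 1)" using assms(1) by (simp add: field_simps)
  have Npos: "real N > 0" using N3 by simp
  have key: "x \<le> 1 / real N \<Longrightarrow> x < a * (1 - x)" for x :: real
  proof -
    assume x: "x \<le> 1 / real N"
    have "1 / real N < a * (1 - 1 / real N)"
      using aN Npos by (simp add: field_simps)
    also have "\<dots> \<le> a * (1 - x)" using x assms(1) by (simp add: mult_left_mono)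
    finally show ?thesis using x by linarith
  qed
  define T where "T = Suc N"
  define p where "p = alg T [(0,0)]"
  define M :: profile where "M = (\<lambda>i t. if i = p then (if t = N - 1 then 1/2 else 0) + (if t = N then 1/2 else 0)
      else (if t \<in> {1..N} then 1 / real N else 0))"
  define D :: "nat \<Rightarrow> profile" where "D = (\<lambda>k i t. if i = p then (if t = Suc k then 1 else 0)
      else (if t \<in> {1..k} then 1 / real N else 0) + (if t = Suc k then 1 - real k / real N else 0))"
  have h0: "history v 0 = [(0,0)]" if "v False 0 = 0" "v True 0 = 0" for v
    using that unfolding history_def by simp
  have Mp: "M p t = (if t = N - 1 then 1/2 else 0) + (if t = N then 1/2 else 0)" for t
    unfolding M_def by simp
  have Mq: "M (\<not>p) t = (if t \<in> {1..N} then 1 / real N else 0)" for t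
    unfolding M_def by simp
  have Dp: "D k p t = (if t = Suc k then 1 else 0)" for k t
    unfolding D_def by simp
  have Dq: "D k (\<not>p) t = (if t \<in> {1..k} then 1 / real N else 0) + (if t = Suc k then 1 - real k / real N else 0)" for k t
    unfolding D_def by simp
  have sumq: "(\<Sum>t<T. (if t \<in> {1..m} then 1 / real N else 0)) = real m / real N" if "m \<le> N" for m
  proof -
    have "(\<Sum>t<T. (if t \<in> {1..m} then 1 / real N else 0)) = (\<Sum>t\<in>{..<T} \<inter> {1..m}. 1 / real N)"
      by (rule sum.inter_restrict[symmetric]) simp
    also have "{..<T} \<inter> {1..m} = {1..m}" using that unfolding T_def by auto
    finally show ?thesis by simp
  qed
  have M0: "history M 0 = [(0,0)]" using N3 by (intro h0) (auto simp: M_def)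
  have p0: "alg T (history M 0) = p" using M0 p_def by simp
  show "\<exists>T v. normalized T v \<and> \<not> a_EFX a v (run_alg alg T v)"
  proof (cases "\<exists>k. 1 \<le> k \<and> k \<le> N - 2 \<and> alg T (history M k) = (\<not> p)")
    case True
    define k where "k = (LEAST k. 1 \<le> k \<and> k \<le> N - 2 \<and> alg T (history M k) = (\<not> p))"
    have k: "1 \<le> k" "k \<le> N - 2" "alg T (history M k) = (\<not> p)"
      using LeastI_ex[OF True] unfolding k_def by auto
    have kmin: "alg T (history M j) = p" if "1 \<le> j" "j < k" for j
      using not_less_Least[of j "\<lambda>k. 1 \<le> k \<and> k \<le> N - 2 \<and> alg T (history M k) = (\<not> p)"] that k
      unfolding k_def[symmetric] by auto
    let ?v = "D k"
    have agree: "history ?v t = history M t" if "t \<le> k" for t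
    proof (rule hist_eq)
      fix i s assume "s \<le> t"
      then have "s \<le> k" using that by simp
      then show "D k i s = M i s" using k N3
        by (cases "i = p") (auto simp: D_def M_def)
    qed
    have norm: "normalized T ?v"
      unfolding normalized_def
    proof (intro conjI allI)
      fix i t show "0 \<le> D k i t" using k N3 Npos
        by (cases "i = p") (auto simp: D_def field_simps)
    next
      fix i
      show "(\<Sum>t<T. D k i t) = 1"
      proof (cases "i = p")
        case True
        have "Suc k < Suc N" using k N3 by linarith
        then show ?thesis using True unfolding T_def by (simp add: Dp)
      next
        case False
        then have i: "i = (\<not> p)" by auto
        have "(\<Sum>t<T. D k i t) = (\<Sum>t<T. (if t \<in> {1..k} then 1 / real N else 0)) + (\<Sum>t<T. (if t = Suc k then 1 - real k / real N else 0))"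
          unfolding i Dq by (rule sum.distrib)
        also have "\<dots> = real k / real N + (1 - real k / real N)"
        proof -
          have "k \<le> N" "Suc k < T" using k N3 unfolding T_def by linarith+
          then show ?thesis using sumq[of k] by simp
        qed
        finally show ?thesis by simp
      qed
    qed
    let ?A = "run_alg alg T ?v"
    have A0: "0 \<in> ?A p" using agree[of 0] p0 unfolding run_alg_def T_def by auto
    have Ak: "k \<in> ?A (\<not> p)" using agree[of k] k unfolding run_alg_def T_def by auto
    have Alow: "t \<in> ?A p" if "t < k" for t
    proof (cases "t = 0")
      case True then show ?thesis using A0 by simp
    next
      case False then show ?thesis using agree[of t] kmin[of t] that k unfolding run_alg_def T_def by auto
    qed
    show ?thesis
    proof (cases "alg T (history ?v (Suc k)) = p")
      case Hp: True
      have vals: "D k (\<not>p) t = (if t = k then 1 / real N else 0)" if "t \<in> ?A (\<not> p)" for t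
      proof -
        have "\<not> t < k" using Alow that unfolding run_alg_def by auto
        moreover have "t \<noteq> Suc k" using Hp that unfolding run_alg_def by auto
        ultimately show ?thesis using k by (auto simp: Dq)
      qed
      have own: "val ?v (\<not>p) (?A (\<not> p)) = 1 / real N"
      proof -
        have "(\<Sum>t\<in>?A (\<not>p). D k (\<not>p) t) = (\<Sum>t\<in>?A (\<not>p). if t = k then 1 / real N else 0)"
          by (rule sum.cong) (simp_all add: vals)
        then show ?thesis unfolding val_def using Ak run_fin by simp
      qed
      have oth: "val ?v (\<not>p) (?A p) = 1 - 1 / real N"
        using run_part[of ?v "\<not>p" alg T p] norm own unfolding normalized_def by simp
      have "\<not> a_EFX a ?v ?A"
        by (rule viol[where i="\<not>p" and j=p and g=0]) (use assms run_fin A0 own oth key in \<open>auto simp: Dq\<close>)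
      then show ?thesis using norm by blast
    next
      case Hq: False
      have vals: "D k p t = 0" if "t \<in> ?A p" for t
      proof -
        have "t \<noteq> Suc k" using Hq that unfolding run_alg_def by auto
        then show ?thesis by (simp add: Dp)
      qed
      have own: "val ?v p (?A p) = 0"
        unfolding val_def by (simp add: vals)
      have oth: "val ?v p (?A (\<not>p)) = 1"
        using run_part[of ?v p alg T "\<not>p"] norm own unfolding normalized_def by simp
      have "\<not> a_EFX a ?v ?A"
        by (rule viol[where i=p and j="\<not>p" and g=k]) (use assms run_fin Ak own oth k in \<open>auto simp: Dp\<close>)
      then show ?thesis using norm by blast
    qed
  next
    case False
    then have allp: "alg T (history M k) = p" if "1 \<le> k" "k \<le> N - 2" for k
      using that by auto
    have norm: "normalized T M"
      unfolding normalized_def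
    proof (intro conjI allI)
      fix i t show "0 \<le> M i t" using Npos
        by (cases "i = p") (auto simp: M_def)
    next
      fix i
      show "(\<Sum>t<T. M i t) = 1"
      proof (cases "i = p")
        case True
        have "(\<Sum>t<T. M i t) = (\<Sum>t<T. (if t = N - 1 then 1/2 else 0)) + (\<Sum>t<T. (if t = N then 1/2 else 0 :: real))"
          unfolding True Mp by (rule sum.distrib)
        also have "\<dots> = 1" using N3 unfolding T_def by simp
        finally show ?thesis .
      next
        case False
        then have i: "i = (\<not> p)" by auto
        show ?thesis unfolding i Mq using sumq[of N] Npos by simp
      qed
    qed
    let ?A = "run_alg alg T M"
    have A0: "0 \<in> ?A p" using p0 unfolding run_alg_def T_def by auto
    have Asub: "?A (\<not>p) \<subseteq> {N - 1, N}"
    proof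
      fix t assume t: "t \<in> ?A (\<not>p)"
      then have "t < Suc N" "alg T (history M t) = (\<not>p)" unfolding run_alg_def T_def by auto
      then have a1: "alg T (history M t) = (\<not>p)" by simp
      have "t \<noteq> 0"
      proof
        assume "t = 0" then have "alg T (history M t) = p" using p0 by simp
        then show False using a1 by simp
      qed
      moreover have "\<not> (1 \<le> t \<and> t \<le> N - 2)"
      proof
        assume "1 \<le> t \<and> t \<le> N - 2" then have "alg T (history M t) = p" using allp by blast
        then show False using a1 by simp
      qed
      ultimately have "t = N - 1 \<or> t = N" using \<open>t < Suc N\<close> N3 by linarith
      then show "t \<in> {N - 1, N}" by blast
    qed
    show ?thesis
    proof (cases "N - 1 \<in> ?A (\<not>p) \<and> N \<in> ?A (\<not>p)")
      case both: True
      have Ap: "t \<notin> {N - 1, N}" if "t \<in> ?A p" for t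
        using that both unfolding run_alg_def by auto
      have vals: "M p t = 0" if "t \<in> ?A p" for t
        using Ap[OF that] by (simp add: Mp)
      have own: "val M p (?A p) = 0"
        unfolding val_def by (simp add: vals)
      have oth: "val M p (?A (\<not>p)) = 1"
        using run_part[of M p alg T "\<not>p"] norm own unfolding normalized_def by simp
      have "M p (N - 1) = 1/2" using N3 by (simp add: Mp)
      then have "\<not> a_EFX a M ?A"
        by (intro viol[where i=p and j="\<not>p" and g="N - 1"]) (use assms run_fin both own oth in auto)
      then show ?thesis using norm by blast
    next
      case nb: False
      then have "?A (\<not>p) \<subseteq> {N - 1} \<or> ?A (\<not>p) \<subseteq> {N}" using Asub by blast
      then have c1: "card (?A (\<not>p)) \<le> 1"
      proof
        assume "?A (\<not>p) \<subseteq> {N - 1}"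
        then show ?thesis using card_mono[of "{N - 1}"] by fastforce
      next
        assume "?A (\<not>p) \<subseteq> {N}"
        then show ?thesis using card_mono[of "{N}"] by fastforce
      qed
      have vals: "M (\<not>p) t = 1 / real N" if "t \<in> ?A (\<not>p)" for t
        using Asub that N3 by (auto simp: Mq)
      have own: "val M (\<not>p) (?A (\<not>p)) = real (card (?A (\<not>p))) / real N"
        unfolding val_def by (simp add: vals)
      have ownle: "val M (\<not>p) (?A (\<not>p)) \<le> 1 / real N"
        unfolding own using c1 Npos by (simp add: divide_right_mono)
      have oth: "val M (\<not>p) (?A p) = 1 - val M (\<not>p) (?A (\<not>p))"
        using run_part[of M "\<not>p" alg T p] norm unfolding normalized_def by simp
      have "M (\<not>p) 0 = 0" by (simp add: Mq)
      then have "\<not> a_EFX a M ?A"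
        by (intro viol[where i="\<not>p" and j=p and g=0]) (use assms run_fin A0 oth key[OF ownle] in auto)
      then show ?thesis using norm by blast
    qed
  qed
qed

end
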